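(* The $\sigma$-finiteness hypothesis in the occupancy equivalence cannot be dropped: (a) there exist an MDP and a policy $\pi$ whose occupancy measure is not $\sigma$-finite for which the ratio $\tilde\pi(a|s)=\mu^\pi_\gamma(s,a)/\mu^\pi_\gamma(s)$ is undetermined; and (b) there exist an MDP and a policy $\pi$ whose occupancy measure is not $\sigma$-finite such that no Markovian policy has the same occupancy measure as $\pi$.
   Context: MDP $m=\langle \mathcal{S},\mathcal{A},p_0,p,r,\gamma\rangle$ with state/action spaces, terminal state $s_f$ (reaching it ends the episode), initial distribution $p_0$, transition kernel $p$, reward $r$, discount $\gamma\in[0,1]$. A policy maps trajectory histories to distributions over actions; Markovian if it depends only on the current state. Occupancy measure: $\mu^\pi_\gamma(\sigma,\alpha)=\mathbb{E}[\sum_{t\ge0}\gamma^t\mathbf{1}(S_t\in\sigma)\mathbf{1}(A_t\in\alpha)]$, $\mu^\pi_\gamma(\sigma)=\mu^\pi_\gamma(\sigma,\mathcal{A})$, with values in $[0,\infty]$. A measure is $\sigma$-finite if the space is a countable union of sets of finite measure. *)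

theory Defs
  imports "HOL-Probability.Probability" "HOL-Probability.SPMF"
begin

text \<open>Discrete (countable) MDPs: state and action spaces are the whole types,
  with the power-set sigma-algebras.\<close>

record ('s, 'a) mdp =
  init    :: "'s pmf"
  trans   :: "'s \<Rightarrow> 'a \<Rightarrow> 's pmf"
  rew     :: "'s \<Rightarrow> 'a \<Rightarrow> real"
  disc    :: real
  term_st :: 's

definition wf_mdp :: "('s, 'a) mdp \<Rightarrow> bool" where
  "wf_mdp M \<longleftrightarrow> 0 \<le> disc M \<and> disc M \<le> 1"

text \<open>A (general, history-dependent) policy: from the past state-action pairs
  and the current state, a distribution over actions.\<close>
type_synonym ('s, 'a) policy = "('s \<times> 'a) list \<Rightarrow> 's \<Rightarrow> 'a pmf"

definition markovian :: "('s, 'a) policy \<Rightarrow> bool" where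
  "markovian \<pi> \<longleftrightarrow> (\<exists>\<kappa>. \<forall>h s. \<pi> h s = \<kappa> s)"

text \<open>Sub-probability distribution of the history (past pairs, current state S_t)
  at time t, on the event that the episode has not yet ended (s_f not reached).\<close>
fun hist :: "('s, 'a) mdp \<Rightarrow> ('s, 'a) policy \<Rightarrow> nat \<Rightarrow> (('s \<times> 'a) list \<times> 's) spmf" where
  "hist M \<pi> 0 = map_pmf (\<lambda>s. if s = term_st M then None else Some ([], s)) (init M)"
| "hist M \<pi> (Suc t) = bind_spmf (hist M \<pi> t) (\<lambda>(h, s).
      bind_spmf (spmf_of_pmf (\<pi> h s)) (\<lambda>a.
        map_pmf (\<lambda>s'. if s' = term_st M then None else Some (h @ [(s, a)], s')) (trans M s a)))"

definition sa_dist :: "('s, 'a) mdp \<Rightarrow> ('s, 'a) policy \<Rightarrow> nat \<Rightarrow> ('s \<times> 'a) spmf" where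
  "sa_dist M \<pi> t = bind_spmf (hist M \<pi> t) (\<lambda>(h, s). map_spmf (\<lambda>a. (s, a)) (spmf_of_pmf (\<pi> h s)))"

definition occ :: "('s, 'a) mdp \<Rightarrow> ('s, 'a) policy \<Rightarrow> ('s \<times> 'a) set \<Rightarrow> ennreal" where
  "occ M \<pi> X = (\<Sum>t. ennreal (disc M ^ t * measure (measure_spmf (sa_dist M \<pi> t)) X))"

definition sigma_finite_occ :: "(('s \<times> 'a) set \<Rightarrow> ennreal) \<Rightarrow> bool" where
  "sigma_finite_occ \<mu> \<longleftrightarrow> (\<exists>A :: nat \<Rightarrow> ('s \<times> 'a) set. (\<Union>i. A i) = UNIV \<and> (\<forall>i. \<mu> (A i) < \<infinity>))"

end

theory Submission
  imports Defs
begin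

definition M0 :: "(nat, nat) mdp" where
  "M0 = \<lparr>init = return_pmf 1, trans = (\<lambda>_ _. return_pmf 1), rew = (\<lambda>_ _. 0),
         disc = 1, term_st = 0\<rparr>"

lemma wf_M0: "wf_mdp M0" by (simp add: wf_mdp_def M0_def)

lemma ennreal_suminf_top:
  assumes "\<And>i. 0 \<le> f i" "\<not> summable f"
  shows "(\<Sum>i. ennreal (f i)) = \<infinity>"
  using summable_suminf_not_top[of f, OF assms(1)] assms(2) unfolding infinity_ennreal_def by blast

lemma occ_mono:
  assumes "X \<subseteq> Y" "0 \<le> disc M" shows "occ M \<pi> X \<le> occ M \<pi> Y"
  unfolding occ_def
proof (rule suminf_le)
  fix t
  show "ennreal (disc M ^ t * measure (measure_spmf (sa_dist M \<pi> t)) X)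
     \<le> ennreal (disc M ^ t * measure (measure_spmf (sa_dist M \<pi> t)) Y)"
    using assms by (intro ennreal_leI mult_left_mono measure_spmf.finite_measure_mono) auto
qed auto

lemma not_sf:
  assumes "occ M \<pi> {x} = \<infinity>" "0 \<le> disc M" shows "\<not> sigma_finite_occ (occ M \<pi>)"
proof
  assume "sigma_finite_occ (occ M \<pi>)"
  then obtain A :: "nat \<Rightarrow> _" where A: "(\<Union>i. A i) = UNIV" "\<forall>i. occ M \<pi> (A i) < \<infinity>"
    unfolding sigma_finite_occ_def by blast
  have "x \<in> (\<Union>i. A i)" using A(1) by simp
  then obtain i where "x \<in> A i" by (rule UN_E)
  then have "{x} \<subseteq> A i" by simp
  then have "occ M \<pi> {x} \<le> occ M \<pi> (A i)" using assms(2) by (rule occ_mono)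
  then have "occ M \<pi> (A i) = \<infinity>" using assms(1) by (simp add: top_unique)
  then show False using A(2) by (metis less_irrefl)
qed

lemma hist_det:
  "\<exists>h. hist M0 (\<lambda>h s. return_pmf (f h)) t = return_spmf (h, 1) \<and> length h = t"
proof (induction t)
  case 0
  then show ?case by (simp add: M0_def)
next
  case (Suc t)
  then obtain h where "hist M0 (\<lambda>h s. return_pmf (f h)) t = return_spmf (h, 1)" "length h = t" by blast
  then show ?case by (auto simp: M0_def)
qed

lemma hist_gen:
  "lossless_spmf (hist M0 \<pi> t) \<and> set_spmf (hist M0 \<pi> t) \<subseteq> {(h, s). s = 1}"
proof (induction t)
  case 0
  then show ?case by (simp add: M0_def)
next
  case (Suc t)
  have L: "lossless_spmf (hist M0 \<pi> t)" and S: "set_spmf (hist M0 \<pi> t) \<subseteq> {(h, s). s = 1}"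
    using Suc by blast+
  have eq: "hist M0 \<pi> (Suc t) = bind_spmf (hist M0 \<pi> t) (\<lambda>(h, s).
      bind_spmf (spmf_of_pmf (\<pi> h s)) (\<lambda>a. return_spmf (h @ [(s, a)], 1)))"
    by (simp add: M0_def)
  show ?case
  proof
    show "lossless_spmf (hist M0 \<pi> (Suc t))"
      unfolding eq using L by (simp add: split_beta)
    show "set_spmf (hist M0 \<pi> (Suc t)) \<subseteq> {(h, s). s = 1}"
      unfolding eq by (auto simp: set_bind_spmf set_spmf_bind_pmf split_beta)
  qed
qed

lemma sa_det:
  "\<exists>h. length h = t \<and> sa_dist M0 (\<lambda>h s. return_pmf (f h)) t = return_spmf (1, f h)"
proof -
  obtain h where "hist M0 (\<lambda>h s. return_pmf (f h)) t = return_spmf (h, 1)" "length h = t"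
    using hist_det by blast
  then show ?thesis by (auto simp: sa_dist_def)
qed

lemma meas_ret: "measure (measure_spmf (return_spmf x)) X = indicator X x"
  by (simp add: measure_spmf_return_spmf measure_return)

lemma sa_markov:
  assumes "\<And>h s. \<pi> h s = \<kappa> s"
  shows "sa_dist M0 \<pi> t = map_spmf (\<lambda>a. (1, a)) (spmf_of_pmf (\<kappa> 1))"
proof -
  have "sa_dist M0 \<pi> t = bind_spmf (hist M0 \<pi> t) (\<lambda>_. map_spmf (\<lambda>a. (1, a)) (spmf_of_pmf (\<kappa> 1)))"
    unfolding sa_dist_def
    by (rule bind_spmf_cong) (use hist_gen[of \<pi> t] assms in auto)
  also have "\<dots> = map_spmf (\<lambda>a. (1, a)) (spmf_of_pmf (\<kappa> 1))"
    using hist_gen[of \<pi> t] by (simp add: bind_spmf_const lossless_weight_spmfD)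
  finally show ?thesis .
qed

lemma const_sum: "(c::real) \<ge> 0 \<Longrightarrow> (\<Sum>t::nat. ennreal c) = 0 \<or> (\<Sum>t::nat. ennreal c) = \<infinity>"
proof (cases "c = 0")
  case False
  assume "c \<ge> 0"
  have "(\<Sum>t::nat. ennreal c) = \<infinity>"
    by (rule ennreal_suminf_top) (use \<open>c \<ge> 0\<close> False in \<open>simp_all add: summable_const_iff\<close>)
  then show ?thesis by (rule disjI2)
qed simp

lemma d0: "disc M0 = 1" "0 \<le> disc M0" by (simp_all add: M0_def)

definition f1 :: "(nat \<times> nat) list \<Rightarrow> nat" where "f1 = (\<lambda>h. if h = [] then 0 else 1)"
definition \<pi>1 :: "(nat, nat) policy" where "\<pi>1 = (\<lambda>h s. return_pmf (f1 h))"

lemma sa1: "sa_dist M0 \<pi>1 t = return_spmf (1, if t = 0 then 0 else 1)"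
proof -
  obtain h where "length h = t" "sa_dist M0 \<pi>1 t = return_spmf (1, f1 h)"
    using sa_det[of t f1] unfolding \<pi>1_def by blast
  then show ?thesis unfolding f1_def by (cases h) auto
qed

lemma B_o1: "occ M0 \<pi>1 {(1, 1)} = \<infinity>"
  unfolding occ_def sa1 meas_ret d0(1)
proof (rule ennreal_suminf_top)
  show "\<not> summable (\<lambda>t::nat. 1 ^ t * (indicator {(1::nat, 1::nat)} (1::nat, if t = 0 then 0::nat else 1)::real))"
  proof
    assume "summable (\<lambda>t::nat. 1 ^ t * (indicator {(1::nat, 1::nat)} (1::nat, if t = 0 then 0::nat else 1)::real))"
    then have "summable (\<lambda>t::nat. 1 ^ (t+1) * (indicator {(1::nat, 1::nat)} (1::nat, if t + 1 = 0 then 0::nat else 1)::real))"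
      by (rule iffD2[OF summable_iff_shift])
    then show False by (simp add: summable_const_iff)
  qed
qed (simp add: indicator_def)

lemma B_o0: "occ M0 \<pi>1 {(1, 0)} = 1"
proof -
  have "occ M0 \<pi>1 {(1, 0)} = (\<Sum>t. ennreal (if t = 0 then 1 else 0))"
    unfolding occ_def sa1 meas_ret d0(1) by (intro suminf_cong) auto
  also have "\<dots> = 1"
    by (subst suminf_finite[of "{0}"]) auto
  finally show ?thesis .
qed

lemma B_nm: "\<not> (markovian \<pi>' \<and> occ M0 \<pi>' = occ M0 \<pi>1)"
proof
  assume a: "markovian \<pi>' \<and> occ M0 \<pi>' = occ M0 \<pi>1"
  then have eq: "occ M0 \<pi>' = occ M0 \<pi>1" by (rule conjunct2)
  from a obtain \<kappa> where k: "\<And>h s. \<pi>' h s = \<kappa> s" unfolding markovian_def by blast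
  define c where "c = measure (measure_spmf (sa_dist M0 \<pi>' 0)) {(1::nat, 0::nat)}"
  have st: "sa_dist M0 \<pi>' t = sa_dist M0 \<pi>' 0" for t
    by (simp only: sa_markov[OF k])
  have e1: "occ M0 \<pi>' {(1, 0)} = (\<Sum>t. ennreal c)"
    unfolding occ_def c_def d0(1) power_one mult_1
    by (rule suminf_cong) (subst st, rule refl)
  have c0: "c \<ge> 0" unfolding c_def by (rule measure_nonneg)
  have "(\<Sum>t::nat. ennreal c) = 0 \<or> (\<Sum>t::nat. ennreal c) = \<infinity>"
    by (rule const_sum[OF c0])
  moreover have "(\<Sum>t::nat. ennreal c) = 1"
    using e1 B_o0 unfolding eq by (rule subst)
  ultimately show False by auto
qed

theorem proposition2:
  shows "(\<exists>(M :: (nat, nat) mdp) (\<pi> :: (nat, nat) policy).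
            wf_mdp M \<and> \<not> sigma_finite_occ (occ M \<pi>) \<and>
            (\<exists>s a. occ M \<pi> {(s, a)} = \<infinity> \<and> occ M \<pi> ({s} \<times> UNIV) = \<infinity>))
       \<and> (\<exists>(M :: (nat, nat) mdp) (\<pi> :: (nat, nat) policy).
            wf_mdp M \<and> \<not> sigma_finite_occ (occ M \<pi>) \<and>
            \<not> (\<exists>\<pi>' :: (nat, nat) policy. markovian \<pi>' \<and> occ M \<pi>' = occ M \<pi>))"
proof
  have d: "disc M0 = 1" "0 \<le> disc M0" by (simp_all add: M0_def)
  define \<pi>0 :: "(nat, nat) policy" where "\<pi>0 = (\<lambda>h s. return_pmf 0)"
  have sa0: "sa_dist M0 \<pi>0 t = return_spmf (1, 0)" for t
    using sa_det[of t "\<lambda>_. 0"] unfolding \<pi>0_def by blast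
  have o1: "occ M0 \<pi>0 {(1, 0)} = \<infinity>"
    unfolding occ_def sa0 meas_ret d(1)
    by (rule ennreal_suminf_top) (auto simp: summable_const_iff)
  have o2: "occ M0 \<pi>0 ({1} \<times> UNIV) = \<infinity>"
  proof -
    have "occ M0 \<pi>0 {(1, 0)} \<le> occ M0 \<pi>0 ({1} \<times> UNIV)"
      by (rule occ_mono) (use d in auto)
    then show ?thesis using o1 by (simp only: top_unique infinity_ennreal_def)
  qed
  show "\<exists>(M :: (nat, nat) mdp) (\<pi> :: (nat, nat) policy).
            wf_mdp M \<and> \<not> sigma_finite_occ (occ M \<pi>) \<and>
            (\<exists>s a. occ M \<pi> {(s, a)} = \<infinity> \<and> occ M \<pi> ({s} \<times> UNIV) = \<infinity>)"
    using wf_M0 not_sf[OF o1 d(2)] o1 o2 by (intro exI[of _ M0] exI[of _ \<pi>0]) auto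
next
  show "\<exists>(M :: (nat, nat) mdp) (\<pi> :: (nat, nat) policy).
            wf_mdp M \<and> \<not> sigma_finite_occ (occ M \<pi>) \<and>
            \<not> (\<exists>\<pi>' :: (nat, nat) policy. markovian \<pi>' \<and> occ M \<pi>' = occ M \<pi>)"
  proof (intro exI[of _ M0] exI[of _ \<pi>1] conjI)
    show "wf_mdp M0" by (rule wf_M0)
    show "\<not> sigma_finite_occ (occ M0 \<pi>1)" by (rule not_sf[OF B_o1 d0(2)])
    show "\<not> (\<exists>\<pi>' :: (nat, nat) policy. markovian \<pi>' \<and> occ M0 \<pi>' = occ M0 \<pi>1)"
      using B_nm by blast
  qed
qed

end
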